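(* Let $4<p\le\infty$ (with the convention $\frac1p=0$ if $p=\infty$), $T>0$, and let $\phi\in L^\infty([0,T])$, $\phi\ge0$, satisfy $$\phi(t)\le c_0(t)+\int_0^t\Big(\frac{1}{(t-s)^{\frac1p+\frac12}}+1\Big)c_1(s)\phi(s)\,ds\quad\text{for a.e. }t\in[0,T],$$ where $c_1\in L^p([0,T])$ is nonnegative and $c_0\in L^\infty([0,T])$ is nonnegative and non-decreasing. Then $$\phi(t)\le c_0(t)\,M_p\big(\|c_1\|_{L^p(0,t)},t\big)\quad\text{for a.e. }t\in[0,T],$$ where $M_p:(\mathbb{R}_+)^2\to[1,\infty)$ is a positive, non-decreasing, continuous function depending only on $p$, of at most exponential-polynomial growth (i.e. bounded by the exponential of a polynomial). *)

theory Defs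
  imports "HOL-Analysis.Analysis"
begin

definition exp_inv :: "ereal \<Rightarrow> real" where
  "exp_inv p = (if p = \<infinity> then 0 else 1 / real_of_ereal p)"

definition in_Lp :: "ereal \<Rightarrow> real set \<Rightarrow> (real \<Rightarrow> real) \<Rightarrow> bool" where
  "in_Lp p A f \<longleftrightarrow> f \<in> borel_measurable (lebesgue_on A) \<and>
     (if p = \<infinity> then (\<exists>C. AE s in lebesgue_on A. \<bar>f s\<bar> \<le> C)
      else integrable (lebesgue_on A) (\<lambda>s. \<bar>f s\<bar> powr real_of_ereal p))"

definition Lp_norm_on :: "ereal \<Rightarrow> real set \<Rightarrow> (real \<Rightarrow> real) \<Rightarrow> real" where
  "Lp_norm_on p A f =
     (if p = \<infinity> then Inf {C. 0 \<le> C \<and> (AE s in lebesgue_on A. \<bar>f s\<bar> \<le> C)}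
      else (integral\<^sup>L (lebesgue_on A) (\<lambda>s. \<bar>f s\<bar> powr real_of_ereal p))
             powr (1 / real_of_ereal p))"

end

theory Submission
  imports Defs
begin

lemma lebesgue_on_integrable_of_has_integral:
  fixes f :: "real \<Rightarrow> real"
  assumes "(f has_integral I) S" "\<And>x. x \<in> S \<Longrightarrow> 0 \<le> f x" "S \<in> sets lebesgue"
  shows "integrable (lebesgue_on S) f" "integral\<^sup>L (lebesgue_on S) f = I"
proof -
  have "f absolutely_integrable_on S"
    using assms nonnegative_absolutely_integrable_1 by blast
  then show i: "integrable (lebesgue_on S) f"
    using assms(3) by (simp add: integrable_restrict_space set_integrable_def)
  show "integral\<^sup>L (lebesgue_on S) f = I"
    using lebesgue_integral_eq_integral[OF i assms(3)] assms(1) by (simp add: integral_unique)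
qed

lemma pow_int:
  fixes t \<rho> :: real assumes t: "0 \<le> t" and r: "\<rho> < 1"
  shows "integrable (lebesgue_on {0..t}) (\<lambda>u. (t-u) powr (-\<rho>))"
    "(LINT u|lebesgue_on {0..t}. (t-u) powr (-\<rho>)) = t powr (1-\<rho>)/(1-\<rho>)"
proof -
  define F where "F u = - ((t-u) powr (1-\<rho>)/(1-\<rho>))" for u
  have "((\<lambda>u. (t-u) powr (-\<rho>)) has_integral (F t - F 0)) {0..t}"
  proof (rule fundamental_theorem_of_calculus_interior[OF t])
    show "continuous_on {0..t} F" unfolding F_def using r
      by (intro continuous_intros continuous_on_powr') (auto intro!: continuous_intros)
    fix x assume x: "x \<in> {0<..<t}"
    have "((\<lambda>u. (t-u) powr (1-\<rho>)) has_real_derivative ((1-\<rho>) * (t-x) powr (1-\<rho>-1) * (-1))) (at x)"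
      using x by (auto intro!: derivative_eq_intros)
    then have "(F has_real_derivative (t-x) powr (-\<rho>)) (at x)"
      unfolding F_def using r x by (auto intro!: derivative_eq_intros)
    then show "(F has_vector_derivative (t-x) powr (-\<rho>)) (at x)"
      by (simp add: has_real_derivative_iff_has_vector_derivative)
  qed
  moreover have "F t - F 0 = t powr (1-\<rho>)/(1-\<rho>)" unfolding F_def using r by simp
  ultimately have h: "((\<lambda>u. (t-u) powr (-\<rho>)) has_integral (t powr (1-\<rho>)/(1-\<rho>))) {0..t}" by simp
  show "integrable (lebesgue_on {0..t}) (\<lambda>u. (t-u) powr (-\<rho>))"
    "(LINT u|lebesgue_on {0..t}. (t-u) powr (-\<rho>)) = t powr (1-\<rho>)/(1-\<rho>)"
    using lebesgue_on_integrable_of_has_integral[OF h] by auto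
qed

lemma exp_neg_le_powr:
  fixes y g :: real assumes "0 < y" "0 \<le> g" "g \<le> 1"
  shows "exp (-y) \<le> y powr (-g)"
proof -
  have "y powr g \<le> 1 + y"
  proof (cases "y \<le> 1")
    case True then have "y powr g \<le> 1" using assms by (intro powr_le1) auto
    then show ?thesis using assms by simp
  next
    case False then have "y powr g \<le> y powr 1" using assms by (intro powr_mono) auto
    then show ?thesis using assms by simp
  qed
  also have "\<dots> \<le> exp y" by (rule exp_ge_add_one_self)
  finally have "y powr g \<le> exp y" .
  then have "1 / exp y \<le> 1 / y powr g" using assms by (intro divide_left_mono) auto
  then show ?thesis using assms by (simp add: exp_minus powr_minus field_simps)
qed

lemma young_pt:
  fixes r q e g L eps x v :: real
  assumes r: "r > 1" and q: "q = r/(r-1)" and e: "0 \<le> e" and g: "0 \<le> g" "g \<le> 1"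
    and L: "L > 0" and eps: "eps > 0" and x: "x \<ge> 0" and v: "v > 0"
  shows "v powr (-e) * exp (-L * v) * x \<le> eps powr r * x powr r / r
           + (L*q) powr (-g) * v powr (-(e*q+g)) / (q * eps powr q)"
proof -
  have q1: "q > 1" using r unfolding q by (simp add: less_divide_eq)
  have rq: "1/r + 1/q = 1" using r q1 unfolding q by (simp add: field_simps)
  define A where "A = eps * x"
  define B where "B = v powr (-e) * exp (-L * v) / eps"
  have AB: "v powr (-e) * exp (-L * v) * x = A * B" unfolding A_def B_def using eps by simp
  have Y: "A * B \<le> A powr r / r + B powr q / q"
    by (rule Youngs_inequality) (use r q1 rq eps x in \<open>auto simp: A_def B_def\<close>)
  have Ar: "A powr r = eps powr r * x powr r" unfolding A_def using eps x by (simp add: powr_mult)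
  have Bq: "B powr q = (v powr (-e)) powr q * (exp (-L * v)) powr q / eps powr q"
    unfolding B_def using eps v by (simp add: powr_mult powr_divide)
  have B1: "(v powr (-e)) powr q = v powr (-(e*q))" by (simp add: powr_powr)
  have B2: "(exp (-L * v)) powr q = exp (-(L*q * v))" by (simp add: powr_def)
  have B3: "exp (-(L*q * v)) \<le> (L*q * v) powr (-g)"
    by (rule exp_neg_le_powr) (use L v q1 g in auto)
  have B4: "(L*q * v) powr (-g) = (L*q) powr (-g) * v powr (-g)"
    using L q1 v by (simp add: powr_mult)
  have B5: "v powr (-(e*q)) * v powr (-g) = v powr (-(e*q+g))" by (simp add: powr_add[symmetric])
  have "B powr q \<le> v powr (-(e*q)) * ((L*q) powr (-g) * v powr (-g)) / eps powr q"
    unfolding Bq B1 B2 B4[symmetric] using B3 eps by (intro divide_right_mono mult_left_mono) auto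
  also have "\<dots> = (L*q) powr (-g) * v powr (-(e*q+g)) / eps powr q" using B5 by (simp add: algebra_simps)
  finally have "B powr q / q \<le> (L*q) powr (-g) * v powr (-(e*q+g)) / (q * eps powr q)"
    using q1 by (simp add: divide_right_mono field_simps)
  moreover have "A powr r / r = eps powr r * x powr r / r" by (simp add: Ar)
  ultimately show ?thesis using Y AB by linarith
qed

lemma borel_to_lebesgue_on: "(f::real\<Rightarrow>real) \<in> borel_measurable borel \<Longrightarrow> f \<in> borel_measurable (lebesgue_on S)"
  apply (rule measurable_restrict_space1)
  apply (rule measurable_completion)
  by simp

lemma AE_lebesgue_on_neq: "AE u in lebesgue_on S. u \<in> S \<and> u \<noteq> (t::real)" if "S \<in> sets lebesgue"
proof -
  have "AE u in lebesgue. u \<noteq> t" by (rule AE_completion[OF AE_lborel_singleton])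
  then have "AE u in lebesgue. u \<in> S \<longrightarrow> u \<noteq> t" by eventually_elim auto
  then show ?thesis using that by (simp add: AE_restrict_space_iff)
qed

lemma powr_le_1_plus: fixes t e :: real assumes "0 \<le> t" "0 \<le> e" "e \<le> 1" shows "t powr e \<le> 1 + t"
proof (cases "t \<le> 1")
  case True then have "t powr e \<le> 1" using assms by (intro powr_le1) auto
  then show ?thesis using assms by simp
next
  case False then have "t powr e \<le> t powr 1" using assms by (intro powr_mono) auto
  then show ?thesis using assms False by simp
qed

lemma core:
  fixes r q a g L eps P t0 t :: real and c1 :: "real \<Rightarrow> real"
  assumes r: "r > 1" and q: "q = r/(r-1)" and a: "0 \<le> a" "a*q < 1" and g: "g = (1 - a*q)/2"
    and L: "L > 0" and eps: "eps > 0" and t: "0 \<le> t" "t \<le> t0"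
    and c1m: "c1 \<in> borel_measurable (lebesgue_on {0..t})"
    and c1p: "AE u in lebesgue_on {0..t}. 0 \<le> c1 u"
    and c1i: "integrable (lebesgue_on {0..t}) (\<lambda>u. \<bar>c1 u\<bar> powr r)"
    and c1P: "(LINT u|lebesgue_on {0..t}. \<bar>c1 u\<bar> powr r) \<le> P"
    and h1: "eps powr r * P / r \<le> 1/8"
    and h2: "(L*q) powr (-g) * (1+t0) / (q * eps powr q * g) \<le> 1/8"
  shows "integrable (lebesgue_on {0..t}) (\<lambda>u. (1/(t-u) powr a + 1) * c1 u * exp (L*u))"
    "(LINT u|lebesgue_on {0..t}. (1/(t-u) powr a + 1) * c1 u * exp (L*u)) \<le> exp (L*t)/2"
proof -
  have q1: "q > 1" using r unfolding q by (simp add: less_divide_eq)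
  have aq: "0 \<le> a*q" using a q1 by simp
  have g0: "0 < g" "g \<le> 1/2" using g a aq by auto
  have S: "{0..t} \<in> sets lebesgue" by simp
  define D where "D = (L*q) powr (-g) / (q * eps powr q)"
  have D0: "0 \<le> D" unfolding D_def using q1 by simp
  define H where "H u = 2 * (eps powr r / r * \<bar>c1 u\<bar> powr r) + D * ((t-u) powr (-(a*q+g)) + (t-u) powr (-g))" for u
  define G where "G u = (1/(t-u) powr a + 1) * c1 u * exp (- L * (t - u))" for u
  have ag: "a*q+g < 1" using g a by simp
  have g1: "g < 1" using g0 by simp
  note i1 = pow_int[OF t(1) ag] and i2 = pow_int[OF t(1) g1]
  have Hi: "integrable (lebesgue_on {0..t}) H"
    unfolding H_def
    using i1(1) i2(1) c1i by simp
  have "integral\<^sup>L (lebesgue_on {0..t}) H = 2 * (eps powr r / r * (LINT u|lebesgue_on {0..t}. \<bar>c1 u\<bar> powr r))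
          + D * (t powr (1-(a*q+g))/(1-(a*q+g)) + t powr (1-g)/(1-g))"
    unfolding H_def using c1i i1 i2
    by (simp add: integrable_add integrable_mult_right)
  also have "1-(a*q+g) = g" using g by simp
  finally have HI: "integral\<^sup>L (lebesgue_on {0..t}) H = 2 * (eps powr r / r * (LINT u|lebesgue_on {0..t}. \<bar>c1 u\<bar> powr r))
          + D * (t powr g/g + t powr (1-g)/(1-g))" .
  have "2 * (eps powr r / r * (LINT u|lebesgue_on {0..t}. \<bar>c1 u\<bar> powr r)) \<le> 2 * (eps powr r / r * P)"
    using c1P r by (intro mult_left_mono) auto
  also have "\<dots> \<le> 1/4" using h1 by (simp add: mult.commute mult.left_commute)
  finally have p1: "2 * (eps powr r / r * (LINT u|lebesgue_on {0..t}. \<bar>c1 u\<bar> powr r)) \<le> 1/4" .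
  have "t powr g/g \<le> (1+t0)/g" using powr_le_1_plus[OF t(1), of g] g0 t by (intro divide_right_mono) auto
  moreover have "t powr (1-g)/(1-g) \<le> (1+t0)/g"
  proof -
    have "t powr (1-g)/(1-g) \<le> (1+t0)/(1-g)" using powr_le_1_plus[OF t(1), of "1-g"] g0 t by (intro divide_right_mono) auto
    also have "\<dots> \<le> (1+t0)/g" using g0 t by (intro divide_left_mono) auto
    finally show ?thesis .
  qed
  moreover have "(1+t0)/g + (1+t0)/g = 2*(1+t0)/g" by simp
  ultimately have "t powr g/g + t powr (1-g)/(1-g) \<le> 2*(1+t0)/g" by linarith
  then have "D * (t powr g/g + t powr (1-g)/(1-g)) \<le> D * (2*(1+t0)/g)"
    using D0 by (intro mult_left_mono) auto
  also have "\<dots> = 2 * ((L*q) powr (-g) * (1+t0) / (q * eps powr q * g))" unfolding D_def by simp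
  also have "\<dots> \<le> 1/4" using h2 by linarith
  finally have HH: "integral\<^sup>L (lebesgue_on {0..t}) H \<le> 1/2" using HI p1 by simp
  have pt: "AE u in lebesgue_on {0..t}. 0 \<le> G u \<and> G u \<le> H u"
    using AE_lebesgue_on_neq[OF S, of t] c1p
  proof (eventually_elim)
    case (elim u)
    then have u: "0 \<le> u" "u < t" and cu: "0 \<le> c1 u" by auto
    define v where "v = t - u"
    have v: "v > 0" using u by (simp add: v_def)
    have Gu: "G u = v powr (-a) * exp (-L * v) * c1 u + v powr (-0) * exp (-L * v) * c1 u"
      unfolding G_def v_def[symmetric] using v by (simp add: powr_minus_divide algebra_simps)
    have Y1: "v powr (-a) * exp (-L * v) * c1 u \<le> eps powr r * c1 u powr r / r
           + (L*q) powr (-g) * v powr (-(a*q+g)) / (q * eps powr q)"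
      by (rule young_pt[OF r q a(1) _ _ L eps cu v]) (use g0 in auto)
    have Y2: "v powr (-0) * exp (-L * v) * c1 u \<le> eps powr r * c1 u powr r / r
           + (L*q) powr (-g) * v powr (-(0*q+g)) / (q * eps powr q)"
      by (rule young_pt[OF r q _ _ _ L eps cu v]) (use g0 in auto)
    have Hu: "H u = 2 * (eps powr r * c1 u powr r / r) + ((L*q) powr (-g) * v powr (-(a*q+g)) / (q * eps powr q)
           + (L*q) powr (-g) * v powr (-(0*q+g)) / (q * eps powr q))"
      unfolding H_def D_def v_def[symmetric] using cu by (simp add: add_divide_distrib algebra_simps)
    have "G u \<le> H u" unfolding Gu Hu using Y1 Y2 by linarith
    moreover have "0 \<le> G u" unfolding G_def using cu u by (intro mult_nonneg_nonneg) auto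
    ultimately show ?case by simp
  qed
  have Gm: "G \<in> borel_measurable (lebesgue_on {0..t})"
  proof -
    have "(\<lambda>u::real. 1/(t-u) powr a + 1) \<in> borel_measurable borel" by measurable
    then have f1: "(\<lambda>u::real. 1/(t-u) powr a + 1) \<in> borel_measurable (lebesgue_on {0..t})"
      by (rule borel_to_lebesgue_on)
    have "(\<lambda>u::real. exp (- L * (t - u))) \<in> borel_measurable borel" by measurable
    then have f2: "(\<lambda>u::real. exp (- L * (t - u))) \<in> borel_measurable (lebesgue_on {0..t})"
      by (rule borel_to_lebesgue_on)
    show ?thesis unfolding G_def
      by (rule borel_measurable_times[OF borel_measurable_times[OF f1 c1m] f2])
  qed
  have Gi: "integrable (lebesgue_on {0..t}) G"
    by (rule Bochner_Integration.integrable_bound[OF Hi Gm]) (use pt in \<open>eventually_elim, auto\<close>)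
  have "integral\<^sup>L (lebesgue_on {0..t}) G \<le> integral\<^sup>L (lebesgue_on {0..t}) H"
    by (rule integral_mono_AE[OF Gi Hi]) (use pt in \<open>eventually_elim, auto\<close>)
  also have "\<dots> \<le> 1/2" by (rule HH)
  finally have GI: "integral\<^sup>L (lebesgue_on {0..t}) G \<le> 1/2" .
  have eq: "(\<lambda>u. (1/(t-u) powr a + 1) * c1 u * exp (L*u)) = (\<lambda>u. exp (L*t) * G u)"
    unfolding G_def by (auto simp: algebra_simps simp flip: exp_add)
  show "integrable (lebesgue_on {0..t}) (\<lambda>u. (1/(t-u) powr a + 1) * c1 u * exp (L*u))"
    unfolding eq using Gi by simp
  show "(LINT u|lebesgue_on {0..t}. (1/(t-u) powr a + 1) * c1 u * exp (L*u)) \<le> exp (L*t)/2"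
    unfolding eq using GI by simp
qed

lemma AE_sub:
  assumes "AE x in lebesgue_on A. P x" "B \<subseteq> A" "A \<in> sets lebesgue" "B \<in> sets lebesgue"
  shows "AE x in lebesgue_on B. P x"
proof -
  have "AE x in lebesgue. x \<in> A \<longrightarrow> P x" using assms by (simp add: AE_restrict_space_iff)
  then have "AE x in lebesgue. x \<in> B \<longrightarrow> P x" by eventually_elim (use assms(2) in auto)
  then show ?thesis using assms by (simp add: AE_restrict_space_iff)
qed

lemma lint_le:
  fixes f g :: "'a \<Rightarrow> real"
  assumes "integrable M g" "AE x in M. 0 \<le> f x" "AE x in M. f x \<le> g x"
  shows "integral\<^sup>L M f \<le> integral\<^sup>L M g"
proof (cases "integrable M f")
  case True then show ?thesis using assms by (intro integral_mono_AE) auto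
next
  case False
  have "0 \<le> integral\<^sup>L M g" using assms by (intro integral_nonneg_AE) (auto elim: AE_mp)
  then show ?thesis using False by (simp add: not_integrable_integral_eq)
qed

lemma boot:
  fixes a L t0 T \<Phi> :: real and \<phi> c0 c1 :: "real \<Rightarrow> real"
  assumes t0: "0 \<le> t0" "t0 \<le> T" and L: "L > 0"
    and Est: "\<And>t. t \<in> {0..t0} \<Longrightarrow>
        integrable (lebesgue_on {0..t}) (\<lambda>u. (1/(t-u) powr a + 1) * c1 u * exp (L * u)) \<and>
        (LINT u|lebesgue_on {0..t}. (1/(t-u) powr a + 1) * c1 u * exp (L * u)) \<le> exp (L*t)/2"
    and phiB: "AE s in lebesgue_on {0..T}. \<bar>\<phi> s\<bar> \<le> \<Phi>"
    and phi0: "AE s in lebesgue_on {0..T}. 0 \<le> \<phi> s"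
    and c10: "AE s in lebesgue_on {0..T}. 0 \<le> c1 s"
    and c00: "\<forall>t\<in>{0..T}. 0 \<le> c0 t" and c0m: "mono_on {0..T} c0"
    and Hyp: "AE t in lebesgue_on {0..T}. \<phi> t \<le> c0 t + (LINT s|lebesgue_on {0..t}. (1/(t-s) powr a + 1) * c1 s * \<phi> s)"
    and Hyp0: "\<phi> t0 \<le> c0 t0 + (LINT s|lebesgue_on {0..t0}. (1/(t0-s) powr a + 1) * c1 s * \<phi> s)"
  shows "\<phi> t0 \<le> c0 t0 * (1 + exp (L * t0))"
proof -
  define c where "c = c0 t0"
  have c0': "0 \<le> c" unfolding c_def using c00 t0 by auto
  define Bd where "Bd b \<longleftrightarrow> (AE s in lebesgue_on {0..t0}. \<phi> s \<le> b * exp (L * s))" for b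
  have IB: "(LINT u|lebesgue_on {0..s}. (1/(s-u) powr a + 1) * c1 u * \<phi> u) \<le> b * exp (L * s) / 2"
    if s: "s \<in> {0..t0}" and b: "0 \<le> b" and Bb: "Bd b" for s b
  proof -
    have sub: "{0..s} \<subseteq> {0..T}" "{0..s} \<subseteq> {0..t0}" using s t0 by auto
    have E: "integrable (lebesgue_on {0..s}) (\<lambda>u. (1/(s-u) powr a + 1) * c1 u * exp (L * u))"
      "(LINT u|lebesgue_on {0..s}. (1/(s-u) powr a + 1) * c1 u * exp (L * u)) \<le> exp (L * s)/2"
      using Est[OF s] by auto
    have A1: "AE u in lebesgue_on {0..s}. 0 \<le> \<phi> u" by (rule AE_sub[OF phi0 sub(1)]) auto
    have A2: "AE u in lebesgue_on {0..s}. 0 \<le> c1 u" by (rule AE_sub[OF c10 sub(1)]) auto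
    have A3: "AE u in lebesgue_on {0..s}. \<phi> u \<le> b * exp (L * u)"
      by (rule AE_sub[OF Bb[unfolded Bd_def] sub(2)]) auto
    have K0: "0 \<le> 1/(s-u) powr a + 1" for u by (simp add: add_nonneg_nonneg)
    have "(LINT u|lebesgue_on {0..s}. (1/(s-u) powr a + 1) * c1 u * \<phi> u)
         \<le> (LINT u|lebesgue_on {0..s}. b * ((1/(s-u) powr a + 1) * c1 u * exp (L * u)))"
    proof (rule lint_le)
      show "integrable (lebesgue_on {0..s}) (\<lambda>u. b * ((1/(s-u) powr a + 1) * c1 u * exp (L * u)))"
        using E(1) by simp
      show "AE u in lebesgue_on {0..s}. 0 \<le> (1/(s-u) powr a + 1) * c1 u * \<phi> u"
        using A1 A2 by eventually_elim (use K0 in auto)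
      show "AE u in lebesgue_on {0..s}. (1/(s-u) powr a + 1) * c1 u * \<phi> u \<le> b * ((1/(s-u) powr a + 1) * c1 u * exp (L * u))"
        using A2 A3
      proof eventually_elim
        case (elim u)
        have "(1/(s-u) powr a + 1) * c1 u * \<phi> u \<le> (1/(s-u) powr a + 1) * c1 u * (b * exp (L * u))"
          using elim K0[of u] by (intro mult_left_mono) auto
        then show ?case by (simp add: algebra_simps)
      qed
    qed
    also have "\<dots> = b * (LINT u|lebesgue_on {0..s}. (1/(s-u) powr a + 1) * c1 u * exp (L * u))" by simp
    also have "\<dots> \<le> b * (exp (L * s)/2)" using E(2) b by (intro mult_left_mono) auto
    finally show ?thesis by simp
  qed
  have step: "Bd (c + b/2)" if b: "0 \<le> b" and Bb: "Bd b" for b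
  proof -
    have H1: "AE s in lebesgue_on {0..t0}. \<phi> s \<le> c0 s + (LINT u|lebesgue_on {0..s}. (1/(s-u) powr a + 1) * c1 u * \<phi> u)"
      by (rule AE_sub[OF Hyp]) (use t0 in auto)
    have H2: "AE s in lebesgue_on {0..t0}. s \<in> {0..t0} \<and> s \<noteq> 0"
      by (rule AE_lebesgue_on_neq) auto
    show ?thesis unfolding Bd_def using H1 H2
    proof eventually_elim
      case (elim s)
      then have s: "s \<in> {0..t0}" by auto
      have "c0 s \<le> c" unfolding c_def using s t0 by (intro mono_onD[OF c0m]) auto
      moreover have "1 \<le> exp (L * s)" using s L by auto
      moreover have "c * 1 \<le> c * exp (L * s)" using c0' \<open>1 \<le> exp (L * s)\<close> by (intro mult_left_mono) auto
      ultimately have "c0 s \<le> c * exp (L * s)" by linarith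
      then show ?case using elim IB[OF s b Bb] by (simp add: algebra_simps)
    qed
  qed
  define \<Phi>' where "\<Phi>' = max \<Phi> 0"
  have base: "Bd (2*c + \<Phi>')"
  proof -
    have "AE s in lebesgue_on {0..t0}. \<bar>\<phi> s\<bar> \<le> \<Phi>" by (rule AE_sub[OF phiB]) (use t0 in auto)
    moreover have H2: "AE s in lebesgue_on {0..t0}. s \<in> {0..t0} \<and> s \<noteq> 0"
      by (rule AE_lebesgue_on_neq) auto
    ultimately show ?thesis unfolding Bd_def
    proof eventually_elim
      case (elim s)
      have "1 \<le> exp (L * s)" using elim L by auto
      moreover have "0 \<le> 2*c + \<Phi>'" using c0' by (simp add: \<Phi>'_def)
      ultimately have "(2*c + \<Phi>') * 1 \<le> (2*c + \<Phi>') * exp (L * s)" by (intro mult_left_mono)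
      then have "2*c + \<Phi>' \<le> (2*c + \<Phi>') * exp (L * s)" by simp
      moreover have "\<phi> s \<le> 2*c + \<Phi>'" using elim c0' by (auto simp: \<Phi>'_def)
      ultimately show ?case by linarith
    qed
  qed
  have all: "Bd (2*c + \<Phi>' * (1/2)^n)" for n
  proof (induction n)
    case 0 then show ?case using base by simp
  next
    case (Suc n)
    have nn: "0 \<le> 2*c + \<Phi>' * (1/2)^n" using c0' by (simp add: \<Phi>'_def)
    have eq: "c + (2*c + \<Phi>' * (1/2)^n)/2 = 2*c + \<Phi>' * (1/2)^(Suc n)" by simp
    from step[OF nn Suc] show ?case unfolding eq .
  qed
  have fin: "Bd (2*c)"
  proof -
    have "AE s in lebesgue_on {0..t0}. \<forall>n. \<phi> s \<le> (2*c + \<Phi>' * (1/2)^n) * exp (L * s)"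
      using all unfolding Bd_def by (simp add: AE_all_countable)
    then show ?thesis unfolding Bd_def
    proof eventually_elim
      case (elim s)
      have "(\<lambda>n. (2*c + \<Phi>' * (1/2)^n) * exp (L * s)) \<longlonglongrightarrow> (2*c + \<Phi>' * 0) * exp (L * s)"
        by (intro tendsto_intros LIMSEQ_realpow_zero) auto
      then have lim: "(\<lambda>n. (2*c + \<Phi>' * (1/2)^n) * exp (L * s)) \<longlonglongrightarrow> 2*c * exp (L * s)" by simp
      show ?case by (rule LIMSEQ_le_const[OF lim]) (use elim in auto)
    qed
  qed
  have "(LINT u|lebesgue_on {0..t0}. (1/(t0-u) powr a + 1) * c1 u * \<phi> u) \<le> 2*c * exp (L * t0) / 2"
    by (rule IB[OF _ _ fin]) (use t0 c0' in auto)
  then have "\<phi> t0 \<le> c + 2*c * exp (L * t0) / 2" using Hyp0 unfolding c_def by linarith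
  then show ?thesis unfolding c_def by (simp add: algebra_simps)
qed

lemma Zbound:
  fixes r q g R :: real
  assumes r: "r > 1" and q: "q > 0" and g: "g > 0" and R: "R \<ge> 0"
  shows "\<exists>C k. C \<ge> 0 \<and> (\<forall>Z\<ge>1. 1 + exp ((1/q) * (8*Z/(q*g) * (8*(Z powr R + 1)/r) powr (q/r)) powr (1/g) * Z)
            \<le> exp (C * Z^k))"
proof -
  define K2 where "K2 = 8/(q*g) * (16/r) powr (q/r)"
  define e where "e = (1 + R*q/r)/g + 1"
  define k where "k = nat (ceiling e)"
  define K3 where "K3 = (1/q) * K2 powr (1/g)"
  have K2: "K2 > 0" unfolding K2_def using q g r by simp
  have K3: "K3 \<ge> 0" unfolding K3_def using q by simp
  have e0: "e \<ge> 0" unfolding e_def using R q r g by simp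
  show ?thesis
  proof (intro exI conjI allI impI)
    show "1 + K3 \<ge> 0" using K3 by simp
    fix Z :: real assume Z: "1 \<le> Z"
    have ZR: "1 \<le> Z powr R" using Z R by (simp add: ge_one_powr_ge_zero)
    have "8*(Z powr R + 1)/r \<le> 16 * Z powr R / r" using ZR r by (simp add: divide_right_mono)
    then have "(8*(Z powr R + 1)/r) powr (q/r) \<le> (16 * Z powr R / r) powr (q/r)"
      using r q ZR by (intro powr_mono2) auto
    also have "\<dots> = (16/r) powr (q/r) * Z powr (R*q/r)"
      using r Z by (simp add: powr_mult powr_divide powr_powr)
    finally have "8*Z/(q*g) * (8*(Z powr R + 1)/r) powr (q/r) \<le> 8*Z/(q*g) * ((16/r) powr (q/r) * Z powr (R*q/r))"
      using Z q g by (intro mult_left_mono) auto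
    also have "\<dots> = K2 * Z powr (1 + R*q/r)" unfolding K2_def using Z by (simp add: powr_add)
    finally have W: "8*Z/(q*g) * (8*(Z powr R + 1)/r) powr (q/r) \<le> K2 * Z powr (1 + R*q/r)" .
    have "(8*Z/(q*g) * (8*(Z powr R + 1)/r) powr (q/r)) powr (1/g) \<le> (K2 * Z powr (1 + R*q/r)) powr (1/g)"
      using W Z q g r by (intro powr_mono2) auto
    also have "\<dots> = K2 powr (1/g) * Z powr ((1 + R*q/r)/g)"
      using K2 Z by (simp add: powr_mult powr_powr)
    finally have "(1/q) * (8*Z/(q*g) * (8*(Z powr R + 1)/r) powr (q/r)) powr (1/g) * Z
        \<le> (1/q) * (K2 powr (1/g) * Z powr ((1 + R*q/r)/g)) * Z"
      using q Z by (intro mult_right_mono mult_left_mono) auto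
    also have "\<dots> = K3 * Z powr e" unfolding K3_def e_def using Z by (simp add: powr_add)
    also have "Z powr e \<le> Z powr (real k)" unfolding k_def using Z e0 by (intro powr_mono) auto
    also have "Z powr (real k) = Z^k" using Z by (simp add: powr_realpow)
    finally have LL: "(1/q) * (8*Z/(q*g) * (8*(Z powr R + 1)/r) powr (q/r)) powr (1/g) * Z \<le> K3 * Z^k"
      using K3 by (simp add: mult_left_mono)
    define y where "y = (1/q) * (8*Z/(q*g) * (8*(Z powr R + 1)/r) powr (q/r)) powr (1/g) * Z"
    have y0: "0 \<le> y" unfolding y_def using q Z by simp
    have "1 + exp y \<le> exp (1 + y)"
    proof -
      have "1 \<le> exp y" using y0 by simp
      moreover have "2 \<le> exp (1::real)" using exp_ge_add_one_self[of 1] by simp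
      moreover have "2 * exp y \<le> exp 1 * exp y" using \<open>2 \<le> exp (1::real)\<close> by (intro mult_right_mono) auto
      ultimately have "1 + exp y \<le> exp 1 * exp y" by linarith
      then show ?thesis by (simp add: exp_add)
    qed
    also have "1 + y \<le> (1 + K3) * Z^k"
    proof -
      have "1 \<le> Z^k" using Z by simp
      then show ?thesis using LL y_def by (simp add: algebra_simps)
    qed
    then have "exp (1 + y) \<le> exp ((1 + K3) * Z^k)" by simp
    finally show "1 + exp ((1/q) * (8*Z/(q*g) * (8*(Z powr R + 1)/r) powr (q/r)) powr (1/g) * Z)
            \<le> exp ((1 + K3) * Z^k)" unfolding y_def .
  qed
qed

lemma c1_facts:
  fixes p :: ereal and T t0 r :: real and c1 :: "real \<Rightarrow> real"
  assumes p: "4 < p" and c1L: "in_Lp p {0..T} c1" and t0: "0 \<le> t0" "t0 \<le> T"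
    and r: "r = (if p = \<infinity> then 5 else real_of_ereal p)"
  shows "0 \<le> Lp_norm_on p {0..t0} c1"
    "c1 \<in> borel_measurable (lebesgue_on {0..t0})"
    "integrable (lebesgue_on {0..t0}) (\<lambda>u. \<bar>c1 u\<bar> powr r)"
    "(LINT u|lebesgue_on {0..t0}. \<bar>c1 u\<bar> powr r) \<le> (1 + Lp_norm_on p {0..t0} c1 + t0) powr (r+1)"
proof -
  have sub: "{0..t0} \<subseteq> {0..T}" using t0 by auto
  have mT: "c1 \<in> borel_measurable (lebesgue_on {0..T})" using c1L unfolding in_Lp_def by auto
  show m: "c1 \<in> borel_measurable (lebesgue_on {0..t0})"
    using measurable_restrict_mono[OF mT sub] .
  have r1: "r > 1"
  proof (cases "p = \<infinity>")
    case False
    then obtain x where "p = ereal x" using p by (cases p) auto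
    then show ?thesis using p r False by auto
  qed (use r in auto)
  define N where "N = Lp_norm_on p {0..t0} c1"
  have "0 \<le> N \<and> integrable (lebesgue_on {0..t0}) (\<lambda>u. \<bar>c1 u\<bar> powr r) \<and>
     (LINT u|lebesgue_on {0..t0}. \<bar>c1 u\<bar> powr r) \<le> (1 + N + t0) powr (r+1)"
  proof (cases "p = \<infinity>")
    case False
    then have rp: "r = real_of_ereal p" using r by simp
    have iT: "integrable (lebesgue_on {0..T}) (\<lambda>u. \<bar>c1 u\<bar> powr r)"
      using c1L False unfolding in_Lp_def rp by auto
    have i: "integrable (lebesgue_on {0..t0}) (\<lambda>u. \<bar>c1 u\<bar> powr r)"
      by (rule integrable_subinterval[OF iT]) (use t0 in auto)
    define P where "P = (LINT u|lebesgue_on {0..t0}. \<bar>c1 u\<bar> powr r)"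
    have P0: "0 \<le> P" unfolding P_def by (intro integral_nonneg_AE) auto
    have NP: "N = P powr (1/r)" unfolding N_def Lp_norm_on_def P_def using False rp by simp
    have PN: "P = N powr r" unfolding NP using P0 r1 by (simp add: powr_powr)
    have N0: "0 \<le> N" unfolding NP by simp
    have "P \<le> (1 + N + t0) powr r" unfolding PN using N0 t0 r1 by (intro powr_mono2) auto
    also have "\<dots> \<le> (1 + N + t0) powr (r+1)" using N0 t0 by (intro powr_mono) auto
    finally show ?thesis using N0 i unfolding P_def by simp
  next
    case True
    then have r5: "r = 5" using r by simp
    define S where "S = {C. 0 \<le> C \<and> (AE s in lebesgue_on {0..t0}. \<bar>c1 s\<bar> \<le> C)}"
    have NS: "N = Inf S" unfolding N_def Lp_norm_on_def S_def using True by simp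
    obtain C where C: "AE s in lebesgue_on {0..T}. \<bar>c1 s\<bar> \<le> C" using c1L True unfolding in_Lp_def by auto
    have C': "AE s in lebesgue_on {0..t0}. \<bar>c1 s\<bar> \<le> max C 0"
      using AE_sub[OF C sub] by (auto elim: AE_mp)
    have "max C 0 \<in> S" unfolding S_def using C' by auto
    then have Sne: "S \<noteq> {}" by auto
    have bdd: "bdd_below S" unfolding S_def by (rule bdd_belowI[of _ 0]) auto
    have N0: "0 \<le> N" unfolding NS using Sne by (intro cInf_greatest) (auto simp: S_def)
    have "AE s in lebesgue_on {0..t0}. \<bar>c1 s\<bar> \<le> N + 1/(Suc n)" for n
    proof -
      have "Inf S < N + 1/(Suc n)" unfolding NS by simp
      then obtain D where "D \<in> S" "D < N + 1/(Suc n)" using cInf_lessD[OF Sne] by blast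
      then show ?thesis unfolding S_def by (auto elim: AE_mp)
    qed
    then have "AE s in lebesgue_on {0..t0}. \<forall>n. \<bar>c1 s\<bar> \<le> N + 1/(Suc n)"
      by (simp add: AE_all_countable)
    then have AN: "AE s in lebesgue_on {0..t0}. \<bar>c1 s\<bar> \<le> N"
    proof eventually_elim
      case (elim s)
      show ?case
      proof (rule ccontr)
        assume "\<not> \<bar>c1 s\<bar> \<le> N"
        then have "0 < \<bar>c1 s\<bar> - N" by simp
        then obtain n where n: "n > 0" "inverse (real n) < \<bar>c1 s\<bar> - N" using ex_inverse_of_nat_less by blast
        have "1/real (Suc n) \<le> inverse (real n)" using n by (simp add: field_simps)
        then show False using elim[rule_format, of n] n by simp
      qed
    qed
    have hc: "((\<lambda>x. N powr 5) has_integral (t0 * N powr 5)) {0..t0}"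
      using has_integral_const_real[of "N powr 5" 0 t0] t0 by simp
    have nn: "\<And>x. x \<in> {0..t0} \<Longrightarrow> 0 \<le> N powr 5" by simp
    have Ssets: "{0..t0} \<in> sets lebesgue" by simp
    note ci = lebesgue_on_integrable_of_has_integral[OF hc nn Ssets]
    have m5: "(\<lambda>u. \<bar>c1 u\<bar> powr r) \<in> borel_measurable (lebesgue_on {0..t0})" using m by measurable
    have bnd: "AE u in lebesgue_on {0..t0}. \<bar>c1 u\<bar> powr r \<le> N powr 5"
      using AN by eventually_elim (auto simp: r5 intro: powr_mono2)
    have i: "integrable (lebesgue_on {0..t0}) (\<lambda>u. \<bar>c1 u\<bar> powr r)"
    proof (rule Bochner_Integration.integrable_bound[OF ci(1) m5])
      show "AE x in lebesgue_on {0..t0}. norm (\<bar>c1 x\<bar> powr r) \<le> norm (N powr 5)"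
        using bnd by eventually_elim auto
    qed
    have "(LINT u|lebesgue_on {0..t0}. \<bar>c1 u\<bar> powr r) \<le> (LINT u|lebesgue_on {0..t0}. N powr 5)"
      by (rule integral_mono_AE[OF i ci(1) bnd])
    also have "\<dots> = t0 * N powr 5" using ci(2) by simp
    also have "\<dots> \<le> (1 + N + t0) powr 1 * (1 + N + t0) powr 5"
      using N0 t0 by (intro mult_mono powr_mono2) auto
    also have "\<dots> = (1 + N + t0) powr (r+1)" using N0 t0 r5 by (simp add: powr_add[symmetric] eval_nat_numeral)
    finally show ?thesis using N0 i by simp
  qed
  then show "0 \<le> Lp_norm_on p {0..t0} c1"
    "integrable (lebesgue_on {0..t0}) (\<lambda>u. \<bar>c1 u\<bar> powr r)"
    "(LINT u|lebesgue_on {0..t0}. \<bar>c1 u\<bar> powr r) \<le> (1 + Lp_norm_on p {0..t0} c1 + t0) powr (r+1)"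
    unfolding N_def by auto
qed

theorem proposition3p3:
  fixes p :: ereal
  assumes "4 < p"
  shows "\<exists>M :: real \<Rightarrow> real \<Rightarrow> real.
    (\<forall>x y. 0 \<le> x \<longrightarrow> 0 \<le> y \<longrightarrow> 1 \<le> M x y) \<and>
    (\<forall>x y x' y'. 0 \<le> x \<longrightarrow> x \<le> x' \<longrightarrow> 0 \<le> y \<longrightarrow> y \<le> y' \<longrightarrow> M x y \<le> M x' y') \<and>
    continuous_on ({0..} \<times> {0..}) (\<lambda>(x, y). M x y) \<and>
    (\<exists>C k. \<forall>x y. 0 \<le> x \<longrightarrow> 0 \<le> y \<longrightarrow> M x y \<le> exp (C * (1 + x + y) ^ k)) \<and>
    (\<forall>(T :: real) (\<phi> :: real \<Rightarrow> real) (c0 :: real \<Rightarrow> real) (c1 :: real \<Rightarrow> real).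
       0 < T \<longrightarrow>
       in_Lp \<infinity> {0..T} \<phi> \<longrightarrow> (AE t in lebesgue_on {0..T}. 0 \<le> \<phi> t) \<longrightarrow>
       in_Lp p {0..T} c1 \<longrightarrow> (AE t in lebesgue_on {0..T}. 0 \<le> c1 t) \<longrightarrow>
       in_Lp \<infinity> {0..T} c0 \<longrightarrow> (\<forall>t\<in>{0..T}. 0 \<le> c0 t) \<longrightarrow> mono_on {0..T} c0 \<longrightarrow>
       (AE t in lebesgue_on {0..T}.
          \<phi> t \<le> c0 t + (LINT s | lebesgue_on {0..t}.
                  (1 / (t - s) powr (exp_inv p + 1/2) + 1) * c1 s * \<phi> s)) \<longrightarrow>
       (AE t in lebesgue_on {0..T}. \<phi> t \<le> c0 t * M (Lp_norm_on p {0..t} c1) t))"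
proof -
  note p = assms
  define r where "r = (if p = \<infinity> then 5 else real_of_ereal p)"
  define a where "a = exp_inv p + 1/2"
  define q where "q = r/(r-1)"
  define g where "g = (1 - a*q)/2"
  define R where "R = r + 1"
  have r4: "r > 4"
  proof (cases "p = \<infinity>")
    case False
    then obtain x where "p = ereal x" using p by (cases p) auto
    then show ?thesis using p False unfolding r_def by auto
  qed (use r_def in auto)
  have r1: "r > 1" using r4 by simp
  have q1: "q > 1" using r1 unfolding q_def by (simp add: less_divide_eq)
  have a0: "0 \<le> a"
    unfolding a_def exp_inv_def using r4 by (auto simp: r_def split: if_splits)
  have aq: "a*q < 1"
  proof (cases "p = \<infinity>")
    case True
    then show ?thesis unfolding a_def q_def r_def exp_inv_def by simp
  next
    case False
    then have ar: "a = 1/r + 1/2" unfolding a_def exp_inv_def r_def by simp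
    have "a*q = (1 + r/2)/(r-1)" unfolding ar q_def using r4 by (simp add: field_simps)
    also have "\<dots> < 1" using r4 by (simp add: divide_less_eq)
    finally show ?thesis .
  qed
  have g0: "g > 0" unfolding g_def using aq by simp
  have R0: "R \<ge> 0" unfolding R_def using r4 by simp
  obtain C k where C0: "C \<ge> 0" and Ck: "\<And>Z. Z \<ge> 1 \<Longrightarrow>
      1 + exp ((1/q) * (8*Z/(q*g) * (8*(Z powr R + 1)/r) powr (q/r)) powr (1/g) * Z) \<le> exp (C * Z^k)"
    using Zbound[OF r1 _ g0 R0, of q] q1 by auto
  define M where "M = (\<lambda>x y::real. exp (C * (1+x+y)^k))"
  show ?thesis
  proof (intro exI[of _ M] conjI)
    show "\<forall>x y. 0 \<le> x \<longrightarrow> 0 \<le> y \<longrightarrow> 1 \<le> M x y" unfolding M_def using C0 by auto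
    show "\<forall>x y x' y'. 0 \<le> x \<longrightarrow> x \<le> x' \<longrightarrow> 0 \<le> y \<longrightarrow> y \<le> y' \<longrightarrow> M x y \<le> M x' y'"
      unfolding M_def using C0 by (auto intro!: mult_left_mono power_mono)
    have "(\<lambda>(x, y). M x y) = (\<lambda>z. exp (C * (1 + fst z + snd z)^k))" unfolding M_def by (auto simp: fun_eq_iff)
    then show "continuous_on ({0..} \<times> {0..}) (\<lambda>(x, y). M x y)"
      by (simp add: continuous_intros)
    show "\<exists>C k. \<forall>x y. 0 \<le> x \<longrightarrow> 0 \<le> y \<longrightarrow> M x y \<le> exp (C * (1 + x + y) ^ k)"
      unfolding M_def by auto
    show "\<forall>(T :: real) (\<phi> :: real \<Rightarrow> real) (c0 :: real \<Rightarrow> real) (c1 :: real \<Rightarrow> real).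
       0 < T \<longrightarrow>
       in_Lp \<infinity> {0..T} \<phi> \<longrightarrow> (AE t in lebesgue_on {0..T}. 0 \<le> \<phi> t) \<longrightarrow>
       in_Lp p {0..T} c1 \<longrightarrow> (AE t in lebesgue_on {0..T}. 0 \<le> c1 t) \<longrightarrow>
       in_Lp \<infinity> {0..T} c0 \<longrightarrow> (\<forall>t\<in>{0..T}. 0 \<le> c0 t) \<longrightarrow> mono_on {0..T} c0 \<longrightarrow>
       (AE t in lebesgue_on {0..T}.
          \<phi> t \<le> c0 t + (LINT s | lebesgue_on {0..t}.
                  (1 / (t - s) powr (exp_inv p + 1/2) + 1) * c1 s * \<phi> s)) \<longrightarrow>
       (AE t in lebesgue_on {0..T}. \<phi> t \<le> c0 t * M (Lp_norm_on p {0..t} c1) t)"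
    proof (intro allI impI)
      fix T :: real and \<phi> c0 c1 :: "real \<Rightarrow> real"
      assume T: "0 < T" and phiL: "in_Lp \<infinity> {0..T} \<phi>" and phi0: "AE t in lebesgue_on {0..T}. 0 \<le> \<phi> t"
        and c1L: "in_Lp p {0..T} c1" and c10: "AE t in lebesgue_on {0..T}. 0 \<le> c1 t"
        and c0L: "in_Lp \<infinity> {0..T} c0" and c00: "\<forall>t\<in>{0..T}. 0 \<le> c0 t" and c0m: "mono_on {0..T} c0"
        and Hyp: "AE t in lebesgue_on {0..T}.
          \<phi> t \<le> c0 t + (LINT s | lebesgue_on {0..t}.
                  (1 / (t - s) powr (exp_inv p + 1/2) + 1) * c1 s * \<phi> s)"
      obtain \<Phi> where phiB: "AE s in lebesgue_on {0..T}. \<bar>\<phi> s\<bar> \<le> \<Phi>" using phiL unfolding in_Lp_def by auto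
      have key: "\<phi> t0 \<le> c0 t0 * M (Lp_norm_on p {0..t0} c1) t0"
        if t0: "t0 \<in> {0..T}" and hyp0: "\<phi> t0 \<le> c0 t0 + (LINT s | lebesgue_on {0..t0}.
                  (1 / (t0 - s) powr (exp_inv p + 1/2) + 1) * c1 s * \<phi> s)" for t0
      proof -
        have t0': "0 \<le> t0" "t0 \<le> T" using t0 by auto
        note cf = c1_facts[OF p c1L t0' r_def]
        define N where "N = Lp_norm_on p {0..t0} c1"
        define Z where "Z = 1 + N + t0"
        have N0: "0 \<le> N" using cf(1) unfolding N_def .
        have Z1: "1 \<le> Z" unfolding Z_def using N0 t0' by simp
        define P where "P = Z powr R"
        have P0: "0 \<le> P" unfolding P_def by simp
        define eps where "eps = (r/(8*(P+1))) powr (1/r)"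
        define W where "W = 8*Z/(q*g) * (8*(P+1)/r) powr (q/r)"
        define L where "L = (1/q) * W powr (1/g)"
        have W0: "W > 0" unfolding W_def using Z1 q1 g0 r1 P0 by simp
        have L0: "L > 0" unfolding L_def using W0 q1 by simp
        have eps0: "eps > 0" unfolding eps_def using r1 P0 by simp
        have epsr: "eps powr r = r/(8*(P+1))" unfolding eps_def using r1 P0 by (simp add: powr_powr)
        have h1: "eps powr r * P / r \<le> 1/8"
        proof -
          have "eps powr r * P / r = P/(8*(P+1))" unfolding epsr using r1 by simp
          also have "\<dots> \<le> 1/8" using P0 by (simp add: divide_le_eq)
          finally show ?thesis .
        qed
        have Lq: "(L*q) powr (-g) = 1/W"
        proof -
          have "L*q = W powr (1/g)" unfolding L_def using q1 by simp
          then have "(L*q) powr (-g) = W powr (-1)" using g0 by (simp add: powr_powr)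
          then show ?thesis using W0 by (simp add: powr_minus_divide)
        qed
        have epsq: "W * eps powr q = 8*Z/(q*g)"
        proof -
          have "eps powr q = (r/(8*(P+1))) powr (q/r)" unfolding eps_def by (simp add: powr_powr)
          then have "(8*(P+1)/r) powr (q/r) * eps powr q = (8*(P+1)/r) powr (q/r) * (r/(8*(P+1))) powr (q/r)"
            by simp
          also have "\<dots> = (8*(P+1)/r * (r/(8*(P+1)))) powr (q/r)"
            by (rule powr_mult[symmetric])
          also have "\<dots> = 1" using r1 P0 by simp
          finally show ?thesis unfolding W_def by (simp add: mult.assoc)
        qed
        have h2: "(L*q) powr (-g) * (1+t0) / (q * eps powr q * g) \<le> 1/8"
        proof -
          have "(L*q) powr (-g) * (1+t0) / (q * eps powr q * g) = (1+t0) / ((W * eps powr q) * q * g)"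
            unfolding Lq by (simp add: field_simps)
          also have "\<dots> = (1+t0)/(8*Z)" unfolding epsq using q1 g0 by (simp add: field_simps)
          also have "\<dots> \<le> 1/8" using Z1 unfolding Z_def using N0 by (simp add: field_simps)
          finally show ?thesis .
        qed
        have Est: "integrable (lebesgue_on {0..t}) (\<lambda>u. (1/(t-u) powr a + 1) * c1 u * exp (L*u)) \<and>
          (LINT u|lebesgue_on {0..t}. (1/(t-u) powr a + 1) * c1 u * exp (L*u)) \<le> exp (L*t)/2"
          if t: "t \<in> {0..t0}" for t
        proof -
          have sub: "{0..t} \<subseteq> {0..t0}" "{0..t} \<subseteq> {0..T}" using t t0 by auto
          have c1m: "c1 \<in> borel_measurable (lebesgue_on {0..t})" by (rule measurable_restrict_mono[OF cf(2) sub(1)])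
          have c1p: "AE u in lebesgue_on {0..t}. 0 \<le> c1 u" by (rule AE_sub[OF c10 sub(2)]) auto
          have c1i: "integrable (lebesgue_on {0..t}) (\<lambda>u. \<bar>c1 u\<bar> powr r)"
            by (rule integrable_subinterval[OF cf(3)]) (use t in auto)
          have "(LINT u|lebesgue_on {0..t}. \<bar>c1 u\<bar> powr r) \<le> (LINT u|lebesgue_on {0..t0}. \<bar>c1 u\<bar> powr r)"
            by (rule integral_mono_lebesgue_on_AE[OF cf(3)]) (use sub in auto)
          also have "\<dots> \<le> P" using cf(4) unfolding P_def Z_def N_def R_def .
          finally have c1P: "(LINT u|lebesgue_on {0..t}. \<bar>c1 u\<bar> powr r) \<le> P" .
          have tt: "0 \<le> t" "t \<le> t0" using t by auto
          show ?thesis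
            using core[OF r1 q_def a0 aq g_def L0 eps0 tt c1m c1p c1i c1P h1 h2] by auto
        qed
        have B: "\<phi> t0 \<le> c0 t0 * (1 + exp (L * t0))"
          by (rule boot[OF t0' L0 _ phiB phi0 c10 c00 c0m Hyp hyp0, unfolded a_def[symmetric]])
             (use Est in \<open>auto simp: a_def\<close>)
        have "1 + exp (L * t0) \<le> 1 + exp (L * Z)" using L0 t0' unfolding Z_def using N0 by simp
        also have "\<dots> \<le> exp (C * Z^k)" using Ck[OF Z1] unfolding L_def W_def P_def by simp
        also have "\<dots> = M N t0" unfolding M_def Z_def by simp
        finally have "c0 t0 * (1 + exp (L * t0)) \<le> c0 t0 * M N t0" using c00 t0 by (intro mult_left_mono) auto
        then show ?thesis using B unfolding N_def by simp
      qed
      have mem: "AE t in lebesgue_on {0..T}. t \<in> {0..T} \<and> t \<noteq> 0" by (rule AE_lebesgue_on_neq) auto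
      show "AE t in lebesgue_on {0..T}. \<phi> t \<le> c0 t * M (Lp_norm_on p {0..t} c1) t"
        using Hyp mem by eventually_elim (use key in auto)
    qed
  qed
qed

end
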